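(* Let $G$ be an open localic groupoid. Then its associated quantale $\mathcal O(G)$, with the structure described in the context, is a groupoid quantale over the base locale $\mathcal O(G_0)$.
   Context: A localic groupoid $G$ has locales $G_0$ (objects), $G_1$ (arrows), maps $d,r:G_1\to G_0$, $u:G_0\to G_1$, $i:G_1\to G_1$, $m:G_2\to G_1$ where $G_2$ is the pullback of $r$ and $d$; it is open if $d$ is an open map of locales (then $m$ is open). $\mathcal O(G)$ is the frame $\mathcal O(G_1)$ with multiplication given by the composite $\mathcal O(G_1)\otimes\mathcal O(G_1)\to\mathcal O(G_2)\xrightarrow{m_!}\mathcal O(G_1)$, involution $q^*=i_!(q)=i^*(q)$, actions of $A=\mathcal O(G_0)$ given by $a\triangleright q=d^*(a)\wedge q$ and $q\triangleleft a=r^*(a)\wedge q$, support $\varsigma=d_!$ and $\upsilon=u^*$. Definitions: for a locale $A$, an $A$-$A$-bimodule is a sup-lattice $M$ with actions $a\triangleright m$, $m\triangleleft a$ preserving joins in each variable with $1_A\triangleright m=m$, $(a\wedge b)\triangleright m=a\triangleright(b\triangleright m)$, $m\triangleleft1_A=m$, $m\triangleleft(a\wedge b)=(m\triangleleft a)\triangleleft b$, $(a\triangleright m)\triangleleft b=a\triangleright(m\triangleleft b)$. An $A$-$A$-quantale is such a $Q$ with associative join-preserving multiplication and $(a\triangleright x)y=a\triangleright(xy)$, $(x\triangleleft a)y=x(a\triangleright y)$, $(xy)\triangleleft a=x(y\triangleleft a)$; involutive if there is a join-preserving $x\mapsto x^*$ with $x^{**}=x$, $(xy)^*=y^*x^*$,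 $(a\triangleright(x\triangleleft b))^*=b\triangleright(x^*\triangleleft a)$. $1_Q$ is the top. A support is a join-preserving $\varsigma:Q\to A$ with $\varsigma(1_Q)=1_A$, $\varsigma(x)\triangleright y\le xx^*y$, $\varsigma(x)\triangleright x=x$; equivariant if $\varsigma(a\triangleright x)=a\wedge\varsigma(x)$. A based quantal frame is an involutive $A$-$A$-quantale that is a frame with $(a\triangleright x)\wedge y=a\triangleright(x\wedge y)$, $(x\triangleleft a)\wedge y=(x\wedge y)\triangleleft a$; reflexive means a frame homomorphism $\upsilon:Q\to A$ with $\upsilon(a\triangleright1_Q)=a=\upsilon(1_Q\triangleleft a)$. $Q\otimes_AQ$ is $Q\otimes Q$ modulo $x\otimes(a\triangleright y)=(x\triangleleft a)\otimes y$, $\mu_A:Q\otimes_AQ\to Q$ the induced multiplication; multiplicative means the right adjoint of $\mu_A$ preserves joins. Unit laws: $\bigvee_{xy\le a}\upsilon(x)\triangleright y=a$ for all $a$; inverse law: $\upsilon(a)\triangleright1_Q=\bigvee_{xy^*\le a}x\wedge y$ for all $a$. A groupoid quantale is a multiplicative, equivariantly supported, reflexive based quantal frame satisfying the unit laws and the inverse law. *)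

theory Defs
  imports Main
begin

unbundle lattice_syntax

class frame = complete_lattice +
  assumes frame_inf_Sup: "x \<sqinter> Sup S = Sup ((\<lambda>s. x \<sqinter> s) ` S)"

text \<open>A map of locales f : X -> Y is represented by its inverse image frame
  homomorphism f^* : O(Y) -> O(X).\<close>

definition frame_hom :: "('a::complete_lattice \<Rightarrow> 'b::complete_lattice) \<Rightarrow> bool" where
  "frame_hom f \<longleftrightarrow> (\<forall>S. f (Sup S) = Sup (f ` S)) \<and> (\<forall>x y. f (x \<sqinter> y) = f x \<sqinter> f y) \<and> f top = top"

text \<open>Left adjoint f_! of a monotone map f^* (it is the left adjoint whenever one exists).\<close>
definition lower_adj :: "('a::complete_lattice \<Rightarrow> 'b::complete_lattice) \<Rightarrow> 'b \<Rightarrow> 'a" where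
  "lower_adj f z = Inf {w. z \<le> f w}"

definition open_map :: "('a::frame \<Rightarrow> 'b::frame) \<Rightarrow> bool" where
  "open_map f \<longleftrightarrow> frame_hom f \<and>
     (\<exists>g. (\<forall>x a. g x \<le> a \<longleftrightarrow> x \<le> f a) \<and> (\<forall>x a. g (x \<sqinter> f a) = g x \<sqinter> a))"

text \<open>For frame homs f : A -> L and g : A -> M (locale maps X -> Y <- Z), the pushout
  L (+)_A M is concretely the frame of saturated C-ideals of L x M: down-closed subsets
  closed under joins in each coordinate (including empty joins) and saturated with
  respect to the relations (x /\ f a) (x) y = x (x) (g a /\ y).\<close>

definition sat_C_ideal :: "('a \<Rightarrow> 'l::complete_lattice) \<Rightarrow> ('a \<Rightarrow> 'm::complete_lattice) \<Rightarrow> ('l \<times> 'm) set \<Rightarrow> bool" where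
  "sat_C_ideal f g D \<longleftrightarrow>
     (\<forall>x y x' y'. (x, y) \<in> D \<longrightarrow> x' \<le> x \<longrightarrow> y' \<le> y \<longrightarrow> (x', y') \<in> D) \<and>
     (\<forall>S y. (\<forall>x\<in>S. (x, y) \<in> D) \<longrightarrow> (Sup S, y) \<in> D) \<and>
     (\<forall>x T. (\<forall>y\<in>T. (x, y) \<in> D) \<longrightarrow> (x, Sup T) \<in> D) \<and>
     (\<forall>x y a. (x \<sqinter> f a, y) \<in> D \<longleftrightarrow> (x, g a \<sqinter> y) \<in> D)"

text \<open>P with p1 : L -> P, p2 : M -> P is a pushout of f, g in the category of frames
  (i.e. the corresponding locale is the pullback) iff p1, p2 are frame homs with
  p1 o f = p2 o g and the canonical comparison map from the concrete pushout is an
  order isomorphism.\<close>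

definition is_frame_pushout ::
  "('a \<Rightarrow> 'l::frame) \<Rightarrow> ('a \<Rightarrow> 'm::frame) \<Rightarrow> ('l \<Rightarrow> 'p::frame) \<Rightarrow> ('m \<Rightarrow> 'p) \<Rightarrow> bool" where
  "is_frame_pushout f g p1 p2 \<longleftrightarrow>
     frame_hom p1 \<and> frame_hom p2 \<and> p1 \<circ> f = p2 \<circ> g \<and>
     (let \<phi> = (\<lambda>D. Sup {p1 x \<sqinter> p2 y | x y. (x, y) \<in> D}) in
       bij_betw \<phi> {D. sat_C_ideal f g D} UNIV \<and>
       (\<forall>D E. sat_C_ideal f g D \<longrightarrow> sat_C_ideal f g E \<longrightarrow> \<phi> D \<le> \<phi> E \<longrightarrow> D \<subseteq> E))"

text \<open>Pairing: given a pushout (p1,p2) of (f,g) and frame homs h : L -> F, k : M -> F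
  with h o f = k o g, the induced frame hom P -> F (inverse image of the pairing map
  of locales into the pullback).\<close>
definition frame_pair ::
  "('l \<Rightarrow> 'p::complete_lattice) \<Rightarrow> ('m \<Rightarrow> 'p) \<Rightarrow> ('l \<Rightarrow> 'c::complete_lattice) \<Rightarrow> ('m \<Rightarrow> 'c) \<Rightarrow> 'p \<Rightarrow> 'c" where
  "frame_pair p1 p2 h k z = Sup {h x \<sqinter> k y | x y. p1 x \<sqinter> p2 y \<le> z}"

text \<open>Data, in terms of inverse image frame homomorphisms:
  d, r : O(G0) -> O(G1) (domain, range), u : O(G1) -> O(G0) (unit), i : O(G1) -> O(G1)
  (inverse), m : O(G1) -> O(G2) (multiplication), where O(G2) with p1, p2 : O(G1) -> O(G2)
  is the pushout of r and d (G2 = pullback of r and d: composable pairs (g,h) with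
  r g = d h), and O(G3) with q1 : O(G2) -> O(G3), q2 : O(G1) -> O(G3) is the pushout of
  p2 o r and d (G3 = pullback of r o pi2 : G2 -> G0 and d : G1 -> G0, composable triples).
  All axioms of an internal groupoid in Loc are expressed contravariantly.\<close>

definition localic_groupoid ::
  "('a0::frame \<Rightarrow> 'a1::frame) \<Rightarrow> ('a0 \<Rightarrow> 'a1) \<Rightarrow> ('a1 \<Rightarrow> 'a0) \<Rightarrow> ('a1 \<Rightarrow> 'a1)
   \<Rightarrow> ('a1 \<Rightarrow> 'a2::frame) \<Rightarrow> ('a1 \<Rightarrow> 'a2) \<Rightarrow> ('a1 \<Rightarrow> 'a2)
   \<Rightarrow> ('a2 \<Rightarrow> 'a3::frame) \<Rightarrow> ('a1 \<Rightarrow> 'a3) \<Rightarrow> bool" where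
  "localic_groupoid d r u i m p1 p2 q1 q2 \<longleftrightarrow>
     frame_hom d \<and> frame_hom r \<and> frame_hom u \<and> frame_hom i \<and> frame_hom m \<and>
     is_frame_pushout r d p1 p2 \<and>
     is_frame_pushout (p2 \<circ> r) d q1 q2 \<and>
     \<comment> \<open>d o u = id, r o u = id\<close>
     u \<circ> d = id \<and> u \<circ> r = id \<and>
     \<comment> \<open>d o m = d o pi1, r o m = r o pi2\<close>
     m \<circ> d = p1 \<circ> d \<and> m \<circ> r = p2 \<circ> r \<and>
     \<comment> \<open>associativity: m o (m x id) = m o (id x m) as maps G3 -> G1\<close>
     (let mxid = frame_pair p1 p2 (q1 \<circ> m) q2;
          pr23 = frame_pair p1 p2 (q1 \<circ> p2) q2;
          idxm = frame_pair p1 p2 (q1 \<circ> p1) (pr23 \<circ> m)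
      in mxid \<circ> m = idxm \<circ> m) \<and>
     \<comment> \<open>unit laws: m o <u o d, id> = id, m o <id, u o r> = id\<close>
     frame_pair p1 p2 (d \<circ> u) id \<circ> m = id \<and>
     frame_pair p1 p2 id (r \<circ> u) \<circ> m = id \<and>
     \<comment> \<open>inverse: d o i = r, r o i = d, m o <id, i> = u o d, m o <i, id> = u o r\<close>
     i \<circ> d = r \<and> i \<circ> r = d \<and>
     frame_pair p1 p2 id i \<circ> m = d \<circ> u \<and>
     frame_pair p1 p2 i id \<circ> m = r \<circ> u"

definition open_localic_groupoid where
  "open_localic_groupoid d r u i m p1 p2 q1 q2 \<longleftrightarrow>
     localic_groupoid d r u i m p1 p2 q1 q2 \<and> open_map d"

text \<open>lact a x = a |> x, ract x a = x <| a.\<close>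

definition bimodule :: "('a::frame \<Rightarrow> 'q::complete_lattice \<Rightarrow> 'q) \<Rightarrow> ('q \<Rightarrow> 'a \<Rightarrow> 'q) \<Rightarrow> bool" where
  "bimodule lact ract \<longleftrightarrow>
     (\<forall>S x. lact (Sup S) x = Sup ((\<lambda>a. lact a x) ` S)) \<and>
     (\<forall>a X. lact a (Sup X) = Sup (lact a ` X)) \<and>
     (\<forall>X a. ract (Sup X) a = Sup ((\<lambda>x. ract x a) ` X)) \<and>
     (\<forall>x S. ract x (Sup S) = Sup (ract x ` S)) \<and>
     (\<forall>x. lact top x = x) \<and>
     (\<forall>a b x. lact (a \<sqinter> b) x = lact a (lact b x)) \<and>
     (\<forall>x. ract x top = x) \<and>
     (\<forall>a b x. ract x (a \<sqinter> b) = ract (ract x a) b) \<and>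
     (\<forall>a b x. ract (lact a x) b = lact a (ract x b))"

definition AA_quantale ::
  "('a::frame \<Rightarrow> 'q::complete_lattice \<Rightarrow> 'q) \<Rightarrow> ('q \<Rightarrow> 'a \<Rightarrow> 'q) \<Rightarrow> ('q \<Rightarrow> 'q \<Rightarrow> 'q) \<Rightarrow> bool" where
  "AA_quantale lact ract mult \<longleftrightarrow>
     bimodule lact ract \<and>
     (\<forall>x y z. mult (mult x y) z = mult x (mult y z)) \<and>
     (\<forall>X y. mult (Sup X) y = Sup ((\<lambda>x. mult x y) ` X)) \<and>
     (\<forall>x Y. mult x (Sup Y) = Sup (mult x ` Y)) \<and>
     (\<forall>a x y. mult (lact a x) y = lact a (mult x y)) \<and>
     (\<forall>a x y. mult (ract x a) y = mult x (lact a y)) \<and>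
     (\<forall>a x y. ract (mult x y) a = mult x (ract y a))"

definition involutive_AA_quantale ::
  "('a::frame \<Rightarrow> 'q::complete_lattice \<Rightarrow> 'q) \<Rightarrow> ('q \<Rightarrow> 'a \<Rightarrow> 'q) \<Rightarrow> ('q \<Rightarrow> 'q \<Rightarrow> 'q) \<Rightarrow> ('q \<Rightarrow> 'q) \<Rightarrow> bool" where
  "involutive_AA_quantale lact ract mult invl \<longleftrightarrow>
     AA_quantale lact ract mult \<and>
     (\<forall>X. invl (Sup X) = Sup (invl ` X)) \<and>
     (\<forall>x. invl (invl x) = x) \<and>
     (\<forall>x y. invl (mult x y) = mult (invl y) (invl x)) \<and>
     (\<forall>a b x. invl (lact a (ract x b)) = lact b (ract (invl x) a))"

definition support ::
  "('a::frame \<Rightarrow> 'q::complete_lattice \<Rightarrow> 'q) \<Rightarrow> ('q \<Rightarrow> 'q \<Rightarrow> 'q) \<Rightarrow> ('q \<Rightarrow> 'q) \<Rightarrow> ('q \<Rightarrow> 'a) \<Rightarrow> bool" where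
  "support lact mult invl \<sigma> \<longleftrightarrow>
     (\<forall>X. \<sigma> (Sup X) = Sup (\<sigma> ` X)) \<and>
     \<sigma> top = top \<and>
     (\<forall>x y. lact (\<sigma> x) y \<le> mult (mult x (invl x)) y) \<and>
     (\<forall>x. lact (\<sigma> x) x = x)"

definition equivariant_support :: "('a::frame \<Rightarrow> 'q::complete_lattice \<Rightarrow> 'q) \<Rightarrow> ('q \<Rightarrow> 'a) \<Rightarrow> bool" where
  "equivariant_support lact \<sigma> \<longleftrightarrow> (\<forall>a x. \<sigma> (lact a x) = a \<sqinter> \<sigma> x)"

definition based_quantal_frame ::
  "('a::frame \<Rightarrow> 'q::frame \<Rightarrow> 'q) \<Rightarrow> ('q \<Rightarrow> 'a \<Rightarrow> 'q) \<Rightarrow> ('q \<Rightarrow> 'q \<Rightarrow> 'q) \<Rightarrow> ('q \<Rightarrow> 'q) \<Rightarrow> bool" where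
  "based_quantal_frame lact ract mult invl \<longleftrightarrow>
     involutive_AA_quantale lact ract mult invl \<and>
     (\<forall>a x y. lact a x \<sqinter> y = lact a (x \<sqinter> y)) \<and>
     (\<forall>a x y. ract x a \<sqinter> y = ract (x \<sqinter> y) a)"

definition reflexive ::
  "('a::frame \<Rightarrow> 'q::frame \<Rightarrow> 'q) \<Rightarrow> ('q \<Rightarrow> 'a \<Rightarrow> 'q) \<Rightarrow> ('q \<Rightarrow> 'a) \<Rightarrow> bool" where
  "reflexive lact ract \<upsilon> \<longleftrightarrow>
     frame_hom \<upsilon> \<and> (\<forall>a. \<upsilon> (lact a top) = a \<and> \<upsilon> (ract top a) = a)"

text \<open>Q (x) Q (tensor of sup-lattices) is the lattice of down-closed subsets of Q x Q closed
  under joins in each coordinate; Q (x)_A Q is its quotient by x (x) (a |> y) = (x <| a) (x) y,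
  i.e. the subsets which are moreover saturated for these relations. Joins are closures
  of unions, x (x) y corresponds to membership of (x,y).\<close>

definition tensA :: "('a \<Rightarrow> 'q::complete_lattice \<Rightarrow> 'q) \<Rightarrow> ('q \<Rightarrow> 'a \<Rightarrow> 'q) \<Rightarrow> ('q \<times> 'q) set set" where
  "tensA lact ract = {D.
     (\<forall>x y x' y'. (x, y) \<in> D \<longrightarrow> x' \<le> x \<longrightarrow> y' \<le> y \<longrightarrow> (x', y') \<in> D) \<and>
     (\<forall>S y. (\<forall>x\<in>S. (x, y) \<in> D) \<longrightarrow> (Sup S, y) \<in> D) \<and>
     (\<forall>x T. (\<forall>y\<in>T. (x, y) \<in> D) \<longrightarrow> (x, Sup T) \<in> D) \<and>
     (\<forall>x y a. (ract x a, y) \<in> D \<longleftrightarrow> (x, lact a y) \<in> D)}"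

definition tensA_Sup :: "('a \<Rightarrow> 'q::complete_lattice \<Rightarrow> 'q) \<Rightarrow> ('q \<Rightarrow> 'a \<Rightarrow> 'q) \<Rightarrow> ('q \<times> 'q) set set \<Rightarrow> ('q \<times> 'q) set" where
  "tensA_Sup lact ract F = \<Inter> {E \<in> tensA lact ract. \<Union> F \<subseteq> E}"

definition muA :: "('q::complete_lattice \<Rightarrow> 'q \<Rightarrow> 'q) \<Rightarrow> ('q \<times> 'q) set \<Rightarrow> 'q" where
  "muA mult D = Sup {mult x y | x y. (x, y) \<in> D}"

definition muA_radj ::
  "('a \<Rightarrow> 'q::complete_lattice \<Rightarrow> 'q) \<Rightarrow> ('q \<Rightarrow> 'a \<Rightarrow> 'q) \<Rightarrow> ('q \<Rightarrow> 'q \<Rightarrow> 'q) \<Rightarrow> 'q \<Rightarrow> ('q \<times> 'q) set" where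
  "muA_radj lact ract mult z = tensA_Sup lact ract {D \<in> tensA lact ract. muA mult D \<le> z}"

definition multiplicative ::
  "('a \<Rightarrow> 'q::complete_lattice \<Rightarrow> 'q) \<Rightarrow> ('q \<Rightarrow> 'a \<Rightarrow> 'q) \<Rightarrow> ('q \<Rightarrow> 'q \<Rightarrow> 'q) \<Rightarrow> bool" where
  "multiplicative lact ract mult \<longleftrightarrow>
     (\<forall>Z. muA_radj lact ract mult (Sup Z) = tensA_Sup lact ract (muA_radj lact ract mult ` Z))"

definition unit_laws :: "('a \<Rightarrow> 'q::complete_lattice \<Rightarrow> 'q) \<Rightarrow> ('q \<Rightarrow> 'q \<Rightarrow> 'q) \<Rightarrow> ('q \<Rightarrow> 'a) \<Rightarrow> bool" where
  "unit_laws lact mult \<upsilon> \<longleftrightarrow> (\<forall>a. Sup {lact (\<upsilon> x) y | x y. mult x y \<le> a} = a)"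

definition inverse_law ::
  "('a \<Rightarrow> 'q::complete_lattice \<Rightarrow> 'q) \<Rightarrow> ('q \<Rightarrow> 'q \<Rightarrow> 'q) \<Rightarrow> ('q \<Rightarrow> 'q) \<Rightarrow> ('q \<Rightarrow> 'a) \<Rightarrow> bool" where
  "inverse_law lact mult invl \<upsilon> \<longleftrightarrow>
     (\<forall>a. lact (\<upsilon> a) top = Sup {x \<sqinter> y | x y. mult x (invl y) \<le> a})"

definition groupoid_quantale ::
  "('a::frame \<Rightarrow> 'q::frame \<Rightarrow> 'q) \<Rightarrow> ('q \<Rightarrow> 'a \<Rightarrow> 'q) \<Rightarrow> ('q \<Rightarrow> 'q \<Rightarrow> 'q) \<Rightarrow> ('q \<Rightarrow> 'q)
    \<Rightarrow> ('q \<Rightarrow> 'a) \<Rightarrow> ('q \<Rightarrow> 'a) \<Rightarrow> bool" where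
  "groupoid_quantale lact ract mult invl \<sigma> \<upsilon> \<longleftrightarrow>
     based_quantal_frame lact ract mult invl \<and>
     multiplicative lact ract mult \<and>
     support lact mult invl \<sigma> \<and> equivariant_support lact \<sigma> \<and>
     reflexive lact ract \<upsilon> \<and>
     unit_laws lact mult \<upsilon> \<and> inverse_law lact mult invl \<upsilon>"

definition OG_lact :: "('a0 \<Rightarrow> 'a1::lattice) \<Rightarrow> 'a0 \<Rightarrow> 'a1 \<Rightarrow> 'a1" where
  "OG_lact d a q = d a \<sqinter> q"

definition OG_ract :: "('a0 \<Rightarrow> 'a1::lattice) \<Rightarrow> 'a1 \<Rightarrow> 'a0 \<Rightarrow> 'a1" where
  "OG_ract r q a = r a \<sqinter> q"

text \<open>x y = m_!(pi1^* x /\ pi2^* y): the image of x (x) y under O(G1) (x) O(G1) -> O(G2) -> O(G1).\<close>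
definition OG_mult :: "('a1::complete_lattice \<Rightarrow> 'a2::complete_lattice) \<Rightarrow> ('a1 \<Rightarrow> 'a2) \<Rightarrow> ('a1 \<Rightarrow> 'a2) \<Rightarrow> 'a1 \<Rightarrow> 'a1 \<Rightarrow> 'a1" where
  "OG_mult m p1 p2 x y = lower_adj m (p1 x \<sqinter> p2 y)"

end

theory Submission
  imports Defs
begin



lemma frame_Sup_inf: "Sup S \<sqinter> (x::'a::frame) = (SUP s\<in>S. s \<sqinter> x)"
  using frame_inf_Sup[of x S] by (simp add: inf_commute)

lemma frame_le_Sup_inf: "\<forall>a\<in>A. a \<sqinter> b \<le> (w::'a::frame) \<Longrightarrow> Sup A \<sqinter> b \<le> w"
  by (simp add: frame_Sup_inf SUP_le_iff)

lemma frame_le_inf_Sup: "\<forall>a\<in>A. b \<sqinter> a \<le> w \<Longrightarrow> b \<sqinter> Sup A \<le> (w::'a::frame)"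
  by (simp add: frame_inf_Sup SUP_le_iff)

lemma fh_Sup: "frame_hom f \<Longrightarrow> f (Sup S) = Sup (f ` S)" unfolding frame_hom_def by blast
lemma fh_inf: "frame_hom f \<Longrightarrow> f (x \<sqinter> y) = f x \<sqinter> f y" unfolding frame_hom_def by blast
lemma fh_top: "frame_hom f \<Longrightarrow> f top = top" unfolding frame_hom_def by blast
lemma fh_mono: assumes "frame_hom f" "x \<le> y" shows "f x \<le> f y"
proof -
  have "f x = f (x \<sqinter> y)" using assms(2) by (simp add: inf_absorb1)
  also have "\<dots> = f x \<sqinter> f y" by (rule fh_inf[OF assms(1)])
  finally show ?thesis by (metis inf.orderI)
qed
lemma fh_bot: "frame_hom f \<Longrightarrow> f bot = bot"
  using fh_Sup[of f "{}"] by simp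
lemma fh_id: "frame_hom id" unfolding frame_hom_def by simp
lemma fh_comp: "frame_hom f \<Longrightarrow> frame_hom g \<Longrightarrow> frame_hom (f \<circ> g)"
  unfolding frame_hom_def by (simp add: image_comp)

lemma adj_lower: assumes "\<forall>x a. g x \<le> a \<longleftrightarrow> x \<le> f a" shows "lower_adj f = g"
proof (rule ext)
  fix z
  have "{w. z \<le> f w} = {w. g z \<le> w}" using assms by auto
  then show "lower_adj f z = g z" unfolding lower_adj_def by (simp add: Inf_atLeast[unfolded atLeast_def])
qed

lemma le_antisym_all: "(\<And>w. (x::'a::order) \<le> w \<longleftrightarrow> y \<le> w) \<Longrightarrow> x = y"
  by (meson order_refl order_antisym)

locale fpush =
  fixes f :: "'a \<Rightarrow> 'l::frame" and g :: "'a \<Rightarrow> 'm::frame"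
    and p1 :: "'l \<Rightarrow> 'p::frame" and p2 :: "'m \<Rightarrow> 'p"
  assumes po: "is_frame_pushout f g p1 p2"
begin

definition phi where "phi D = Sup {p1 x \<sqinter> p2 y | x y. (x, y) \<in> D}"
definition Zs where "Zs w = {(x, y). p1 x \<sqinter> p2 y \<le> w}"

lemma phi_eq: "(\<lambda>D. Sup {p1 x \<sqinter> p2 y | x y. (x, y) \<in> D}) = phi"
  by (rule ext) (simp add: phi_def)

lemma hp1: "frame_hom p1" using po unfolding is_frame_pushout_def by blast
lemma hp2: "frame_hom p2" using po unfolding is_frame_pushout_def by blast
lemma comm: "p1 (f a) = p2 (g a)"
  using po unfolding is_frame_pushout_def by (metis comp_apply)

lemma surj: "\<exists>D. sat_C_ideal f g D \<and> phi D = w"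
proof -
  have "bij_betw phi {D. sat_C_ideal f g D} UNIV"
    using po unfolding is_frame_pushout_def Let_def phi_eq by blast
  then have "w \<in> phi ` {D. sat_C_ideal f g D}" by (simp add: bij_betw_def)
  then show ?thesis by blast
qed

lemma reflect: "sat_C_ideal f g D \<Longrightarrow> sat_C_ideal f g E \<Longrightarrow> phi D \<le> phi E \<Longrightarrow> D \<subseteq> E"
  using po unfolding is_frame_pushout_def Let_def phi_eq by blast

lemma phi_mono: "D \<subseteq> E \<Longrightarrow> phi D \<le> phi E"
  unfolding phi_def by (rule Sup_subset_mono) blast

lemma gen_le_phi: "(x, y) \<in> D \<Longrightarrow> p1 x \<sqinter> p2 y \<le> phi D"
  unfolding phi_def by (rule Sup_upper) blast

lemma phi_Zs_le: "phi (Zs w) \<le> w"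
  unfolding phi_def Zs_def by (rule Sup_least) blast

lemma Zs_sat: "sat_C_ideal f g (Zs w)"
  unfolding sat_C_ideal_def Zs_def
proof (intro conjI allI impI)
  fix x y x' y' assume a: "(x, y) \<in> {(x, y). p1 x \<sqinter> p2 y \<le> w}" "x' \<le> x" "y' \<le> y"
  then show "(x', y') \<in> {(x, y). p1 x \<sqinter> p2 y \<le> w}"
  proof -
    have "p1 x' \<sqinter> p2 y' \<le> p1 x \<sqinter> p2 y"
      using fh_mono[OF hp1] fh_mono[OF hp2] \<open>x' \<le> x\<close> \<open>y' \<le> y\<close> by (intro inf_mono) auto
    moreover have "p1 x \<sqinter> p2 y \<le> w" using a(1) by simp
    ultimately have "p1 x' \<sqinter> p2 y' \<le> w" by (rule order_trans)
    then show ?thesis by simp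
  qed
next
  fix S y assume "\<forall>x\<in>S. (x, y) \<in> {(x, y). p1 x \<sqinter> p2 y \<le> w}"
  then show "(Sup S, y) \<in> {(x, y). p1 x \<sqinter> p2 y \<le> w}"
    by (auto simp: fh_Sup[OF hp1] intro!: frame_le_Sup_inf)
next
  fix x T assume "\<forall>y\<in>T. (x, y) \<in> {(x, y). p1 x \<sqinter> p2 y \<le> w}"
  then show "(x, Sup T) \<in> {(x, y). p1 x \<sqinter> p2 y \<le> w}"
    by (auto simp: fh_Sup[OF hp2] intro!: frame_le_inf_Sup)
next
  fix x y a
  have "p1 (x \<sqinter> f a) \<sqinter> p2 y = p1 x \<sqinter> p2 (g a \<sqinter> y)"
    by (simp add: fh_inf[OF hp1] fh_inf[OF hp2] comm inf_assoc)
  then show "((x \<sqinter> f a, y) \<in> {(x, y). p1 x \<sqinter> p2 y \<le> w}) = ((x, g a \<sqinter> y) \<in> {(x, y). p1 x \<sqinter> p2 y \<le> w})"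
    by simp
qed

lemma sat_sub: "sat_C_ideal f g D \<Longrightarrow> D \<subseteq> Zs (phi D)"
  unfolding Zs_def using gen_le_phi by auto

lemma phi_Zs: "phi (Zs w) = w"
proof -
  obtain D where D: "sat_C_ideal f g D" "phi D = w" using surj by blast
  have "D \<subseteq> Zs w" using sat_sub[OF D(1)] D(2) by simp
  then have "w \<le> phi (Zs w)" using phi_mono D(2) by blast
  then show ?thesis using phi_Zs_le by (rule antisym[rotated])
qed

lemma sat_eq: assumes "sat_C_ideal f g D" shows "D = Zs (phi D)"
proof
  show "D \<subseteq> Zs (phi D)" by (rule sat_sub[OF assms])
  show "Zs (phi D) \<subseteq> D" by (rule reflect[OF Zs_sat assms]) (simp add: phi_Zs)
qed

lemma sat_mem: "sat_C_ideal f g D \<Longrightarrow> (x, y) \<in> D \<longleftrightarrow> p1 x \<sqinter> p2 y \<le> phi D"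
  by (subst sat_eq) (auto simp: Zs_def)

lemma Zs_le_iff: "Zs z \<subseteq> Zs w \<longleftrightarrow> z \<le> w"
proof
  assume "Zs z \<subseteq> Zs w" then show "z \<le> w" using phi_mono phi_Zs by metis
next
  assume "z \<le> w" then show "Zs z \<subseteq> Zs w" unfolding Zs_def by auto
qed

lemma gen_Sup: "Sup {p1 x \<sqinter> p2 y | x y. p1 x \<sqinter> p2 y \<le> w} = w"
  using phi_Zs[of w] unfolding phi_def Zs_def by simp

lemma ext_hom:
  assumes F: "frame_hom F" and G: "frame_hom G"
    and e1: "\<And>x. F (p1 x) = G (p1 x)" and e2: "\<And>y. F (p2 y) = G (p2 y)"
  shows "F = G"
proof (rule ext)
  fix w
  define S where "S = {p1 x \<sqinter> p2 y | x y. p1 x \<sqinter> p2 y \<le> w}"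
  have "F ` S = G ` S" unfolding S_def
    by (rule image_cong) (auto simp: fh_inf[OF F] fh_inf[OF G] e1 e2)
  then show "F w = G w" using gen_Sup[of w] fh_Sup[OF F, of S] fh_Sup[OF G, of S]
    unfolding S_def by metis
qed

context
  fixes h :: "'l \<Rightarrow> 'c::frame" and k :: "'m \<Rightarrow> 'c"
  assumes hh: "frame_hom h" and hk: "frame_hom k" and hcomm: "\<And>a. h (f a) = k (g a)"
begin

definition EF where "EF w = {(x, y). h x \<sqinter> k y \<le> w}"

lemma EF_sat: "sat_C_ideal f g (EF w)"
  unfolding sat_C_ideal_def EF_def
proof (intro conjI allI impI)
  fix x y x' y' assume a: "(x, y) \<in> {(x, y). h x \<sqinter> k y \<le> w}" "x' \<le> x" "y' \<le> y"
  then show "(x', y') \<in> {(x, y). h x \<sqinter> k y \<le> w}"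
  proof -
    have "h x' \<sqinter> k y' \<le> h x \<sqinter> k y"
      using fh_mono[OF hh] fh_mono[OF hk] \<open>x' \<le> x\<close> \<open>y' \<le> y\<close> by (intro inf_mono) auto
    moreover have "h x \<sqinter> k y \<le> w" using a(1) by simp
    ultimately have "h x' \<sqinter> k y' \<le> w" by (rule order_trans)
    then show ?thesis by simp
  qed
next
  fix S y assume "\<forall>x\<in>S. (x, y) \<in> {(x, y). h x \<sqinter> k y \<le> w}"
  then show "(Sup S, y) \<in> {(x, y). h x \<sqinter> k y \<le> w}"
    by (auto simp: fh_Sup[OF hh] intro!: frame_le_Sup_inf)
next
  fix x T assume "\<forall>y\<in>T. (x, y) \<in> {(x, y). h x \<sqinter> k y \<le> w}"
  then show "(x, Sup T) \<in> {(x, y). h x \<sqinter> k y \<le> w}"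
    by (auto simp: fh_Sup[OF hk] intro!: frame_le_inf_Sup)
next
  fix x y a
  have "h (x \<sqinter> f a) \<sqinter> k y = h x \<sqinter> k (g a \<sqinter> y)"
    by (simp add: fh_inf[OF hh] fh_inf[OF hk] hcomm inf_assoc)
  then show "((x \<sqinter> f a, y) \<in> {(x, y). h x \<sqinter> k y \<le> w}) = ((x, g a \<sqinter> y) \<in> {(x, y). h x \<sqinter> k y \<le> w})"
    by simp
qed

lemma fp_le_iff: "frame_pair p1 p2 h k z \<le> w \<longleftrightarrow> z \<le> phi (EF w)"
proof -
  have "frame_pair p1 p2 h k z \<le> w \<longleftrightarrow> Zs z \<subseteq> EF w"
    unfolding frame_pair_def Zs_def EF_def by (auto simp: Sup_le_iff)
  also have "\<dots> \<longleftrightarrow> Zs z \<subseteq> Zs (phi (EF w))" using sat_eq[OF EF_sat] by metis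
  also have "\<dots> \<longleftrightarrow> z \<le> phi (EF w)" by (rule Zs_le_iff)
  finally show ?thesis .
qed

lemma fp_gen: "frame_pair p1 p2 h k (p1 x \<sqinter> p2 y) = h x \<sqinter> k y"
proof (rule antisym)
  have "(x, y) \<in> EF (h x \<sqinter> k y)" by (simp add: EF_def)
  then have "p1 x \<sqinter> p2 y \<le> phi (EF (h x \<sqinter> k y))" by (rule gen_le_phi)
  then show "frame_pair p1 p2 h k (p1 x \<sqinter> p2 y) \<le> h x \<sqinter> k y" using fp_le_iff by blast
next
  show "h x \<sqinter> k y \<le> frame_pair p1 p2 h k (p1 x \<sqinter> p2 y)"
    unfolding frame_pair_def by (rule Sup_upper) blast
qed

lemma fp_p1: "frame_pair p1 p2 h k (p1 x) = h x"
  using fp_gen[of x top] by (simp add: fh_top[OF hp2] fh_top[OF hk])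
lemma fp_p2: "frame_pair p1 p2 h k (p2 y) = k y"
  using fp_gen[of top y] by (simp add: fh_top[OF hp1] fh_top[OF hh])

lemma fp_mono: "z \<le> z' \<Longrightarrow> frame_pair p1 p2 h k z \<le> frame_pair p1 p2 h k z'"
  unfolding frame_pair_def by (rule Sup_subset_mono) (blast intro: order_trans)

lemma fp_hom: "frame_hom (frame_pair p1 p2 h k)"
  unfolding frame_hom_def
proof (intro conjI allI)
  fix S :: "'p set"
  show "frame_pair p1 p2 h k (Sup S) = Sup (frame_pair p1 p2 h k ` S)"
  proof (rule le_antisym_all)
    fix w
    show "frame_pair p1 p2 h k (Sup S) \<le> w \<longleftrightarrow> Sup (frame_pair p1 p2 h k ` S) \<le> w"
      by (simp add: fp_le_iff Sup_le_iff)
  qed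
next
  fix z1 z2 :: 'p
  let ?F = "frame_pair p1 p2 h k"
  show "?F (z1 \<sqinter> z2) = ?F z1 \<sqinter> ?F z2"
  proof (rule antisym)
    show "?F (z1 \<sqinter> z2) \<le> ?F z1 \<sqinter> ?F z2" by (simp add: fp_mono)
  next
    have "?F z1 \<sqinter> ?F z2 \<le> ?F (z1 \<sqinter> z2)"
      unfolding frame_pair_def[of p1 p2 h k z1]
    proof (rule frame_le_Sup_inf, safe)
      fix x1 y1 assume 1: "p1 x1 \<sqinter> p2 y1 \<le> z1"
      show "h x1 \<sqinter> k y1 \<sqinter> ?F z2 \<le> ?F (z1 \<sqinter> z2)"
        unfolding frame_pair_def[of p1 p2 h k z2]
      proof (rule frame_le_inf_Sup, safe)
        fix x2 y2 assume 2: "p1 x2 \<sqinter> p2 y2 \<le> z2"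
        have "p1 (x1 \<sqinter> x2) \<sqinter> p2 (y1 \<sqinter> y2) \<le> z1 \<sqinter> z2"
        proof -
          have "p1 (x1 \<sqinter> x2) \<sqinter> p2 (y1 \<sqinter> y2) = (p1 x1 \<sqinter> p2 y1) \<sqinter> (p1 x2 \<sqinter> p2 y2)"
            by (simp add: fh_inf[OF hp1] fh_inf[OF hp2] ac_simps)
          moreover have "(p1 x1 \<sqinter> p2 y1) \<sqinter> (p1 x2 \<sqinter> p2 y2) \<le> z1 \<sqinter> z2" using 1 2 by (rule inf_mono)
          ultimately show ?thesis by (simp only:)
        qed
        then have "h (x1 \<sqinter> x2) \<sqinter> k (y1 \<sqinter> y2) \<le> ?F (z1 \<sqinter> z2)"
          unfolding frame_pair_def by (intro Sup_upper) blast
        then show "h x1 \<sqinter> k y1 \<sqinter> (h x2 \<sqinter> k y2) \<le> ?F (z1 \<sqinter> z2)"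
          by (simp add: fh_inf[OF hh] fh_inf[OF hk] ac_simps)
      qed
    qed
    then show "?F z1 \<sqinter> ?F z2 \<le> ?F (z1 \<sqinter> z2)" .
  qed
next
  show "frame_pair p1 p2 h k top = top"
    using fp_p1[of top] fh_top[OF hp1] fh_top[OF hh] by simp
qed

lemma fp_unique:
  assumes "frame_hom F" "\<And>x. F (p1 x) = h x" "\<And>y. F (p2 y) = k y"
  shows "F = frame_pair p1 p2 h k"
  by (rule ext_hom[OF assms(1) fp_hom]) (simp_all add: assms fp_p1 fp_p2)

end

end




locale olg =
  fixes d r :: "'a0::frame \<Rightarrow> 'a1::frame" and u :: "'a1 \<Rightarrow> 'a0" and i :: "'a1 \<Rightarrow> 'a1"
    and m p1 p2 :: "'a1 \<Rightarrow> 'a2::frame" and q1 :: "'a2 \<Rightarrow> 'a3::frame" and q2 :: "'a1 \<Rightarrow> 'a3"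
  assumes olg: "open_localic_groupoid d r u i m p1 p2 q1 q2"
begin

lemma G: "localic_groupoid d r u i m p1 p2 q1 q2" using olg unfolding open_localic_groupoid_def by blast
lemma od: "open_map d" using olg unfolding open_localic_groupoid_def by blast

lemma hd: "frame_hom d" using G unfolding localic_groupoid_def by blast
lemma hr: "frame_hom r" using G unfolding localic_groupoid_def by blast
lemma hu: "frame_hom u" using G unfolding localic_groupoid_def by blast
lemma hi: "frame_hom i" using G unfolding localic_groupoid_def by blast
lemma hm: "frame_hom m" using G unfolding localic_groupoid_def by blast
lemma poP: "is_frame_pushout r d p1 p2" using G unfolding localic_groupoid_def by blast
lemma poT: "is_frame_pushout (p2 \<circ> r) d q1 q2" using G unfolding localic_groupoid_def by blast
lemma ud: "u (d a) = a" using G unfolding localic_groupoid_def by (metis comp_apply id_apply)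
lemma ur: "u (r a) = a" using G unfolding localic_groupoid_def by (metis comp_apply id_apply)
lemma md: "m (d a) = p1 (d a)" using G unfolding localic_groupoid_def by (metis comp_apply)
lemma mr: "m (r a) = p2 (r a)" using G unfolding localic_groupoid_def by (metis comp_apply)
lemma id': "i (d a) = r a" using G unfolding localic_groupoid_def by (metis comp_apply)
lemma ir: "i (r a) = d a" using G unfolding localic_groupoid_def by (metis comp_apply)
lemma unitL: "frame_pair p1 p2 (d \<circ> u) id \<circ> m = id" using G unfolding localic_groupoid_def by blast
lemma unitR: "frame_pair p1 p2 id (r \<circ> u) \<circ> m = id" using G unfolding localic_groupoid_def by blast
lemma invL: "frame_pair p1 p2 id i \<circ> m = d \<circ> u" using G unfolding localic_groupoid_def by blast
lemma invR: "frame_pair p1 p2 i id \<circ> m = r \<circ> u" using G unfolding localic_groupoid_def by blast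

definition "Mx = frame_pair p1 p2 (q1 \<circ> m) q2"
definition "pr23 = frame_pair p1 p2 (q1 \<circ> p2) q2"
definition "Ix = frame_pair p1 p2 (q1 \<circ> p1) (pr23 \<circ> m)"

lemma assoc_ax: "Mx \<circ> m = Ix \<circ> m"
  using G unfolding localic_groupoid_def Let_def Mx_def pr23_def Ix_def by blast

sublocale P: fpush r d p1 p2 by unfold_locales (rule poP)
sublocale T: fpush "p2 \<circ> r" d q1 q2 by unfold_locales (rule poT)

abbreviation pair where "pair a b \<equiv> frame_pair p1 p2 a b"

definition cmp :: "('a1 \<Rightarrow> 'c) \<Rightarrow> ('a1 \<Rightarrow> 'c) \<Rightarrow> bool" where
  "cmp a b \<longleftrightarrow> (\<forall>x. a (r x) = b (d x))"

lemma pair_hom: fixes a b :: "'a1 \<Rightarrow> 'c::frame" shows "frame_hom a \<Longrightarrow> frame_hom b \<Longrightarrow> cmp a b \<Longrightarrow> frame_hom (pair a b)"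
  unfolding cmp_def by (rule P.fp_hom) auto
lemma pair_p1: fixes a b :: "'a1 \<Rightarrow> 'c::frame" shows "frame_hom a \<Longrightarrow> frame_hom b \<Longrightarrow> cmp a b \<Longrightarrow> pair a b (p1 x) = a x"
  unfolding cmp_def by (rule P.fp_p1) auto
lemma pair_p2: fixes a b :: "'a1 \<Rightarrow> 'c::frame" shows "frame_hom a \<Longrightarrow> frame_hom b \<Longrightarrow> cmp a b \<Longrightarrow> pair a b (p2 x) = b x"
  unfolding cmp_def by (rule P.fp_p2) auto
lemma pair_unique: fixes a b :: "'a1 \<Rightarrow> 'c::frame" shows "frame_hom a \<Longrightarrow> frame_hom b \<Longrightarrow> cmp a b \<Longrightarrow> frame_hom F \<Longrightarrow>
    (\<And>x. F (p1 x) = a x) \<Longrightarrow> (\<And>y. F (p2 y) = b y) \<Longrightarrow> F = pair a b"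
  unfolding cmp_def by (rule P.fp_unique) auto

lemma cmp_p: "cmp p1 p2" unfolding cmp_def by (simp add: P.comm)

lemma pair_comp:
  fixes a b :: "'a1 \<Rightarrow> 'c::frame" and F :: "'c \<Rightarrow> 'e::frame"
  assumes "frame_hom F" "frame_hom a" "frame_hom b" "cmp a b"
  shows "F \<circ> pair a b = pair (F \<circ> a) (F \<circ> b)"
proof (rule pair_unique)
  show "cmp (F \<circ> a) (F \<circ> b)" using assms(4) unfolding cmp_def by simp
qed (use assms in \<open>simp_all add: fh_comp pair_hom pair_p1 pair_p2\<close>)

lemma pair_id: "pair p1 p2 = id"
  by (rule pair_unique[symmetric]) (simp_all add: P.hp1 P.hp2 cmp_p fh_id)

lemma gassoc:
  fixes a b c :: "'a1 \<Rightarrow> 'c::frame"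
  assumes ha: "frame_hom a" and hb: "frame_hom b" and hc: "frame_hom c"
    and ab: "cmp a b" and bc: "cmp b c"
  shows "pair (pair a b \<circ> m) c \<circ> m = pair a (pair b c \<circ> m) \<circ> m"
proof -
  let ?\<alpha> = "pair a b"
  have h\<alpha>: "frame_hom ?\<alpha>" using ha hb ab by (rule pair_hom)
  have \<alpha>1: "\<And>x. ?\<alpha> (p1 x) = a x" using ha hb ab by (rule pair_p1)
  have \<alpha>2: "\<And>x. ?\<alpha> (p2 x) = b x" using ha hb ab by (rule pair_p2)
  have ac: "\<And>x. ?\<alpha> ((p2 \<circ> r) x) = c (d x)" using \<alpha>2 bc unfolding cmp_def by simp
  let ?t = "frame_pair q1 q2 ?\<alpha> c"
  have ht: "frame_hom ?t" by (rule T.fp_hom[OF h\<alpha> hc ac])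
  have t1: "\<And>w. ?t (q1 w) = ?\<alpha> w" by (rule T.fp_p1[OF h\<alpha> hc ac])
  have t2: "\<And>y. ?t (q2 y) = c y" by (rule T.fp_p2[OF h\<alpha> hc ac])
  have Tc: "\<And>x. q1 (p2 (r x)) = q2 (d x)" using T.comm by simp
  have c1: "cmp (q1 \<circ> m) q2" unfolding cmp_def by (simp add: mr Tc)
  have hq1: "frame_hom q1" by (rule T.hp1)
  have hq2: "frame_hom q2" by (rule T.hp2)
  have hM: "frame_hom Mx" unfolding Mx_def by (rule pair_hom[OF fh_comp[OF hq1 hm] hq2 c1])
  have M1: "\<And>x. Mx (p1 x) = q1 (m x)" unfolding Mx_def using pair_p1[OF fh_comp[OF hq1 hm] hq2 c1] by simp
  have M2: "\<And>x. Mx (p2 x) = q2 x" unfolding Mx_def using pair_p2[OF fh_comp[OF hq1 hm] hq2 c1] by simp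
  have c2: "cmp (q1 \<circ> p2) q2" unfolding cmp_def by (simp add: Tc)
  have hpr: "frame_hom pr23" unfolding pr23_def by (rule pair_hom[OF fh_comp[OF hq1 P.hp2] hq2 c2])
  have pr1: "\<And>x. pr23 (p1 x) = q1 (p2 x)" unfolding pr23_def using pair_p1[OF fh_comp[OF hq1 P.hp2] hq2 c2] by simp
  have pr2: "\<And>x. pr23 (p2 x) = q2 x" unfolding pr23_def using pair_p2[OF fh_comp[OF hq1 P.hp2] hq2 c2] by simp
  have c3: "cmp (q1 \<circ> p1) (pr23 \<circ> m)" unfolding cmp_def by (simp add: md pr1 P.comm)
  have hI: "frame_hom Ix" unfolding Ix_def by (rule pair_hom[OF fh_comp[OF hq1 P.hp1] fh_comp[OF hpr hm] c3])
  have I1: "\<And>x. Ix (p1 x) = q1 (p1 x)" unfolding Ix_def using pair_p1[OF fh_comp[OF hq1 P.hp1] fh_comp[OF hpr hm] c3] by simp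
  have I2: "\<And>x. Ix (p2 x) = pr23 (m x)" unfolding Ix_def using pair_p2[OF fh_comp[OF hq1 P.hp1] fh_comp[OF hpr hm] c3] by simp
  have c4: "cmp (?\<alpha> \<circ> m) c" using bc unfolding cmp_def by (simp add: mr \<alpha>2)
  have e1: "?t \<circ> Mx = pair (?\<alpha> \<circ> m) c"
    by (rule pair_unique[OF fh_comp[OF h\<alpha> hm] hc c4 fh_comp[OF ht hM]]) (simp_all add: M1 M2 t1 t2)
  have hbc: "frame_hom (pair b c)" using hb hc bc by (rule pair_hom)
  have e2: "?t \<circ> pr23 = pair b c"
    by (rule pair_unique[OF hb hc bc fh_comp[OF ht hpr]]) (simp_all add: pr1 pr2 t1 t2 \<alpha>2)
  have c5: "cmp a (pair b c \<circ> m)" using ab unfolding cmp_def by (simp add: md pair_p1[OF hb hc bc])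
  have e3: "?t \<circ> Ix = pair a (pair b c \<circ> m)"
  proof (rule pair_unique[OF ha fh_comp[OF hbc hm] c5 fh_comp[OF ht hI]])
    show "\<And>x. (?t \<circ> Ix) (p1 x) = a x" by (simp add: I1 t1 \<alpha>1)
    show "\<And>y. (?t \<circ> Ix) (p2 y) = (pair b c \<circ> m) y"
      using e2 by (simp add: I2) (metis comp_apply)
  qed
  have "pair (?\<alpha> \<circ> m) c \<circ> m = ?t \<circ> (Mx \<circ> m)" using e1 by (metis comp_assoc)
  also have "\<dots> = ?t \<circ> (Ix \<circ> m)" by (simp add: assoc_ax)
  also have "\<dots> = pair a (pair b c \<circ> m) \<circ> m" using e3 by (metis comp_assoc)
  finally show ?thesis .
qed

end



context olg begin

lemma hdu: "frame_hom (d \<circ> u)" by (rule fh_comp[OF hd hu])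
lemma hru: "frame_hom (r \<circ> u)" by (rule fh_comp[OF hr hu])
lemma cmp_du_id: "cmp (d \<circ> u) id" unfolding cmp_def by (simp add: ur)
lemma cmp_id_ru: "cmp id (r \<circ> u)" unfolding cmp_def by (simp add: ud)
lemma cmp_id_i: "cmp id i" unfolding cmp_def by (simp add: id')
lemma cmp_i_id: "cmp i id" unfolding cmp_def by (simp add: ir)

lemma cmp_comp: "cmp a b \<Longrightarrow> cmp (F \<circ> a) (F \<circ> b)" unfolding cmp_def by simp

lemma gunitL: fixes a :: "'a1 \<Rightarrow> 'c::frame" assumes ha: "frame_hom a"
  shows "pair (a \<circ> (d \<circ> u)) a \<circ> m = a"
proof -
  have "a \<circ> pair (d \<circ> u) id = pair (a \<circ> (d \<circ> u)) (a \<circ> id)"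
    by (rule pair_comp[OF ha hdu fh_id cmp_du_id])
  then have "pair (a \<circ> (d \<circ> u)) a \<circ> m = a \<circ> (pair (d \<circ> u) id \<circ> m)" by (metis comp_assoc comp_id)
  then show ?thesis by (simp add: unitL)
qed

lemma gunitR: fixes a :: "'a1 \<Rightarrow> 'c::frame" assumes ha: "frame_hom a"
  shows "pair a (a \<circ> (r \<circ> u)) \<circ> m = a"
proof -
  have "a \<circ> pair id (r \<circ> u) = pair (a \<circ> id) (a \<circ> (r \<circ> u))"
    by (rule pair_comp[OF ha fh_id hru cmp_id_ru])
  then have "pair a (a \<circ> (r \<circ> u)) \<circ> m = a \<circ> (pair id (r \<circ> u) \<circ> m)" by (metis comp_assoc comp_id)
  then show ?thesis by (simp add: unitR)
qed

lemma ginvL: fixes a :: "'a1 \<Rightarrow> 'c::frame" assumes ha: "frame_hom a"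
  shows "pair a (a \<circ> i) \<circ> m = a \<circ> (d \<circ> u)"
proof -
  have "a \<circ> pair id i = pair (a \<circ> id) (a \<circ> i)"
    by (rule pair_comp[OF ha fh_id hi cmp_id_i])
  then have "pair a (a \<circ> i) \<circ> m = a \<circ> (pair id i \<circ> m)" by (metis comp_assoc comp_id)
  then show ?thesis by (simp add: invL)
qed

lemma ginvR: fixes a :: "'a1 \<Rightarrow> 'c::frame" assumes ha: "frame_hom a"
  shows "pair (a \<circ> i) a \<circ> m = a \<circ> (r \<circ> u)"
proof -
  have "a \<circ> pair i id = pair (a \<circ> i) (a \<circ> id)"
    by (rule pair_comp[OF ha hi fh_id cmp_i_id])
  then have "pair (a \<circ> i) a \<circ> m = a \<circ> (pair i id \<circ> m)" by (metis comp_assoc comp_id)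
  then show ?thesis by (simp add: invR)
qed

lemma ii_fun: "i \<circ> i = id"
proof -
  let ?j = "i \<circ> i"
  have hj: "frame_hom ?j" by (rule fh_comp[OF hi hi])
  have j1: "?j \<circ> (d \<circ> u) = pair id i \<circ> m" by (rule ext) (simp add: id' ir invL)
  have c1: "cmp i ?j" unfolding cmp_def by (simp add: id' ir)
  have "?j = pair (?j \<circ> (d \<circ> u)) ?j \<circ> m" by (rule gunitL[OF hj, symmetric])
  also have "\<dots> = pair (pair id i \<circ> m) ?j \<circ> m" by (simp only: j1)
  also have "\<dots> = pair id (pair i ?j \<circ> m) \<circ> m"
    by (rule gassoc[OF fh_id hi hj cmp_id_i c1])
  also have "pair i ?j \<circ> m = r \<circ> u"
  proof -
    have "i \<circ> pair id i = pair (i \<circ> id) (i \<circ> i)" by (rule pair_comp[OF hi fh_id hi cmp_id_i])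
    then have "pair i ?j \<circ> m = i \<circ> (pair id i \<circ> m)" by (metis comp_assoc comp_id)
    also have "\<dots> = r \<circ> u" by (rule ext) (simp add: invL id')
    finally show ?thesis .
  qed
  also have "pair id (r \<circ> u) \<circ> m = id" by (rule unitR)
  finally show ?thesis .
qed

lemma ii: "i (i x) = x" using ii_fun by (metis comp_apply id_apply)

lemma i_le_iff: "i x \<le> y \<longleftrightarrow> x \<le> i y"
  by (metis fh_mono[OF hi] ii)

end



context olg begin

definition "tau = pair m (p2 \<circ> i)"
lemma cmp_tau: "cmp m (p2 \<circ> i)" unfolding cmp_def by (simp add: mr id')
lemma htau: "frame_hom tau" unfolding tau_def by (rule pair_hom[OF hm fh_comp[OF P.hp2 hi] cmp_tau])
lemma tau_p1: "tau (p1 x) = m x" unfolding tau_def by (rule pair_p1[OF hm fh_comp[OF P.hp2 hi] cmp_tau])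
lemma tau_p2: "tau (p2 x) = p2 (i x)" unfolding tau_def using pair_p2[OF hm fh_comp[OF P.hp2 hi] cmp_tau] by simp

lemma cmp_p2_p2i: "cmp p2 (p2 \<circ> i)" unfolding cmp_def by (simp add: id' P.comm)

lemma tau_m_fun: "tau \<circ> m = p1"
proof -
  have "tau \<circ> m = pair (pair p1 p2 \<circ> m) (p2 \<circ> i) \<circ> m" by (simp add: tau_def pair_id)
  also have "\<dots> = pair p1 (pair p2 (p2 \<circ> i) \<circ> m) \<circ> m"
    by (rule gassoc[OF P.hp1 P.hp2 fh_comp[OF P.hp2 hi] cmp_p cmp_p2_p2i])
  also have "pair p2 (p2 \<circ> i) \<circ> m = p1 \<circ> (r \<circ> u)"
  proof -
    have "pair p2 (p2 \<circ> i) \<circ> m = p2 \<circ> (d \<circ> u)" by (rule ginvL[OF P.hp2])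
    also have "\<dots> = p1 \<circ> (r \<circ> u)" by (rule ext) (simp add: P.comm)
    finally show ?thesis .
  qed
  also have "pair p1 (p1 \<circ> (r \<circ> u)) \<circ> m = p1" by (rule gunitR[OF P.hp1])
  finally show ?thesis .
qed

lemma tau_m: "tau (m x) = p1 x" using tau_m_fun by (metis comp_apply)

lemma tau_tau: "tau (tau z) = z"
proof -
  have "tau \<circ> tau = id"
    by (rule P.ext_hom[OF fh_comp[OF htau htau] fh_id]) (simp_all add: tau_p1 tau_p2 tau_m ii)
  then show ?thesis by (metis comp_apply id_apply)
qed

lemma tau_le_iff: "tau z \<le> w \<longleftrightarrow> z \<le> tau w"
proof
  assume "tau z \<le> w" then have "tau (tau z) \<le> tau w" by (rule fh_mono[OF htau])
  then show "z \<le> tau w" by (simp add: tau_tau)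
next
  assume "z \<le> tau w" then have "tau z \<le> tau (tau w)" by (rule fh_mono[OF htau])
  then show "tau z \<le> w" by (simp add: tau_tau)
qed

definition "DL = lower_adj d"

lemma DL_props: "(\<forall>x a. DL x \<le> a \<longleftrightarrow> x \<le> d a) \<and> (\<forall>x a. DL (x \<sqinter> d a) = DL x \<sqinter> a)"
proof -
  obtain g where g: "\<forall>x a. g x \<le> a \<longleftrightarrow> x \<le> d a" "\<forall>x a. g (x \<sqinter> d a) = g x \<sqinter> a"
    using od unfolding open_map_def by blast
  have "DL = g" unfolding DL_def by (rule adj_lower[OF g(1)])
  then show ?thesis using g by simp
qed

lemma DL_adj: "DL x \<le> a \<longleftrightarrow> x \<le> d a" using DL_props by blast
lemma DL_frob: "DL (x \<sqinter> d a) = DL x \<sqinter> a" using DL_props by blast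
lemma DL_unit: "x \<le> d (DL x)" using DL_adj by blast
lemma DL_mono: assumes "x \<le> y" shows "DL x \<le> DL y"
proof -
  have "x \<le> d (DL y)" using assms DL_unit[of y] by (rule order_trans)
  then show ?thesis by (simp add: DL_adj)
qed
lemma DL_Sup: "DL (Sup S) = Sup (DL ` S)"
  by (rule le_antisym_all) (simp add: DL_adj Sup_le_iff)

definition "P1L z = Sup {x \<sqinter> r (DL y) | x y. p1 x \<sqinter> p2 y \<le> z}"

lemma E_sat: "sat_C_ideal r d {(x, y). x \<sqinter> r (DL y) \<le> a}"
  unfolding sat_C_ideal_def
proof (intro conjI allI impI)
  fix x y x' y' assume a: "(x, y) \<in> {(x, y). x \<sqinter> r (DL y) \<le> a}" "x' \<le> x" "y' \<le> y"
  have "x' \<sqinter> r (DL y') \<le> x \<sqinter> r (DL y)"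
    using a(2,3) by (intro inf_mono fh_mono[OF hr] DL_mono) auto
  moreover have "x \<sqinter> r (DL y) \<le> a" using a(1) by simp
  ultimately have "x' \<sqinter> r (DL y') \<le> a" by (rule order_trans)
  then show "(x', y') \<in> {(x, y). x \<sqinter> r (DL y) \<le> a}" by simp
next
  fix S y assume "\<forall>x\<in>S. (x, y) \<in> {(x, y). x \<sqinter> r (DL y) \<le> a}"
  then show "(Sup S, y) \<in> {(x, y). x \<sqinter> r (DL y) \<le> a}"
    by (auto intro!: frame_le_Sup_inf)
next
  fix x T assume "\<forall>y\<in>T. (x, y) \<in> {(x, y). x \<sqinter> r (DL y) \<le> a}"
  then show "(x, Sup T) \<in> {(x, y). x \<sqinter> r (DL y) \<le> a}"
    by (auto simp: DL_Sup fh_Sup[OF hr] image_image intro!: frame_le_inf_Sup)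
next
  fix x y c
  have "x \<sqinter> r c \<sqinter> r (DL y) = x \<sqinter> r (DL (d c \<sqinter> y))"
    by (simp add: inf_commute[of "d c"] DL_frob fh_inf[OF hr] ac_simps)
  then show "((x \<sqinter> r c, y) \<in> {(x, y). x \<sqinter> r (DL y) \<le> a}) = ((x, d c \<sqinter> y) \<in> {(x, y). x \<sqinter> r (DL y) \<le> a})"
    by simp
qed

lemma P1L_adj: "P1L z \<le> a \<longleftrightarrow> z \<le> p1 a"
proof
  assume za: "z \<le> p1 a"
  let ?E = "{(x, y). x \<sqinter> r (DL y) \<le> a}"
  have "(a, top) \<in> ?E" by simp
  then have "p1 a \<sqinter> p2 top \<le> P.phi ?E" by (rule P.gen_le_phi)
  then have zE: "z \<le> P.phi ?E" using za by (simp add: fh_top[OF P.hp2])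
  show "P1L z \<le> a" unfolding P1L_def
  proof (rule Sup_least, safe)
    fix x y assume "p1 x \<sqinter> p2 y \<le> z"
    then have "p1 x \<sqinter> p2 y \<le> P.phi ?E" using zE by (rule order_trans)
    then have "(x, y) \<in> ?E" using P.sat_mem[OF E_sat] by blast
    then show "x \<sqinter> r (DL y) \<le> a" by simp
  qed
next
  assume Pa: "P1L z \<le> a"
  have "Sup {p1 x \<sqinter> p2 y | x y. p1 x \<sqinter> p2 y \<le> z} \<le> p1 a"
  proof (rule Sup_least, safe)
    fix x y assume xy: "p1 x \<sqinter> p2 y \<le> z"
    have "x \<sqinter> r (DL y) \<le> P1L z" unfolding P1L_def using xy by (intro Sup_upper) blast
    then have "x \<sqinter> r (DL y) \<le> a" using Pa by (rule order_trans)
    then have "p1 (x \<sqinter> r (DL y)) \<le> p1 a" by (rule fh_mono[OF P.hp1])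
    moreover have "p1 x \<sqinter> p2 y \<le> p1 (x \<sqinter> r (DL y))"
      using fh_mono[OF P.hp2 DL_unit[of y]]
      by (simp add: fh_inf[OF P.hp1] P.comm le_infI2)
    ultimately show "p1 x \<sqinter> p2 y \<le> p1 a" by (rule order_trans[rotated])
  qed
  then show "z \<le> p1 a" using P.gen_Sup[of z] by simp
qed

lemma P1L_frob: "P1L (z \<sqinter> p1 a) = P1L z \<sqinter> a"
proof (rule antisym)
  show "P1L (z \<sqinter> p1 a) \<le> P1L z \<sqinter> a"
  proof (rule le_infI)
    show "P1L (z \<sqinter> p1 a) \<le> P1L z" unfolding P1L_def
    proof (rule Sup_subset_mono, safe)
      fix x y assume "p1 x \<sqinter> p2 y \<le> z \<sqinter> p1 a"
      then have "p1 x \<sqinter> p2 y \<le> z" by simp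
      then show "\<exists>x' y'. x \<sqinter> r (DL y) = x' \<sqinter> r (DL y') \<and> p1 x' \<sqinter> p2 y' \<le> z" by blast
    qed
    show "P1L (z \<sqinter> p1 a) \<le> a" by (simp add: P1L_adj)
  qed
next
  show "P1L z \<sqinter> a \<le> P1L (z \<sqinter> p1 a)" unfolding P1L_def[of z]
  proof (rule frame_le_Sup_inf, safe)
    fix x y assume xy: "p1 x \<sqinter> p2 y \<le> z"
    have "p1 (x \<sqinter> a) \<sqinter> p2 y \<le> z \<sqinter> p1 a"
    proof -
      have "p1 (x \<sqinter> a) \<sqinter> p2 y = (p1 x \<sqinter> p2 y) \<sqinter> p1 a" by (simp add: fh_inf[OF P.hp1] ac_simps)
      also have "\<dots> \<le> z \<sqinter> p1 a" using xy by (rule inf_mono) simp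
      finally show ?thesis .
    qed
    then have "(x \<sqinter> a) \<sqinter> r (DL y) \<le> P1L (z \<sqinter> p1 a)" unfolding P1L_def by (intro Sup_upper) blast
    then show "x \<sqinter> r (DL y) \<sqinter> a \<le> P1L (z \<sqinter> p1 a)" by (simp add: ac_simps)
  qed
qed

definition "mlow = lower_adj m"

lemma mlow_eq: "mlow = P1L \<circ> tau"
  unfolding mlow_def
proof (rule adj_lower, intro allI)
  fix s a
  show "(P1L \<circ> tau) s \<le> a \<longleftrightarrow> s \<le> m a"
    by (simp add: P1L_adj tau_le_iff tau_p1)
qed

lemma mlow_adj: "mlow s \<le> a \<longleftrightarrow> s \<le> m a"
  by (simp add: mlow_eq P1L_adj tau_le_iff tau_p1)

lemma mlow_frob: "mlow (s \<sqinter> m a) = mlow s \<sqinter> a"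
  by (simp add: mlow_eq fh_inf[OF htau] tau_m P1L_frob)

lemma mlow_unit: "s \<le> m (mlow s)" using mlow_adj by blast
lemma mlow_counit: "mlow (m a) \<le> a" using mlow_adj by blast
lemma mlow_mono: assumes "s \<le> t" shows "mlow s \<le> mlow t"
proof -
  have "s \<le> m (mlow t)" using assms mlow_unit[of t] by (rule order_trans)
  then show ?thesis by (simp add: mlow_adj)
qed
lemma mlow_Sup: "mlow (Sup S) = Sup (mlow ` S)"
  by (rule le_antisym_all) (simp add: mlow_adj Sup_le_iff)

end



context olg begin

definition "sig = pair (p2 \<circ> i) (p1 \<circ> i)"
lemma cmp_sig: "cmp (p2 \<circ> i) (p1 \<circ> i)" unfolding cmp_def by (simp add: ir id' P.comm)
lemma hp1i: "frame_hom (p1 \<circ> i)" by (rule fh_comp[OF P.hp1 hi])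
lemma hp2i: "frame_hom (p2 \<circ> i)" by (rule fh_comp[OF P.hp2 hi])
lemma hsig: "frame_hom sig" unfolding sig_def by (rule pair_hom[OF hp2i hp1i cmp_sig])
lemma sig_p1: "sig (p1 x) = p2 (i x)" unfolding sig_def using pair_p1[OF hp2i hp1i cmp_sig] by simp
lemma sig_p2: "sig (p2 x) = p1 (i x)" unfolding sig_def using pair_p2[OF hp2i hp1i cmp_sig] by simp

lemma sig_sig: "sig (sig z) = z"
proof -
  have "sig \<circ> sig = id"
    by (rule P.ext_hom[OF fh_comp[OF hsig hsig] fh_id]) (simp_all add: sig_p1 sig_p2 ii)
  then show ?thesis by (metis comp_apply id_apply)
qed

lemma sig_le_iff: "sig z \<le> w \<longleftrightarrow> z \<le> sig w"
proof
  assume "sig z \<le> w" then have "sig (sig z) \<le> sig w" by (rule fh_mono[OF hsig])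
  then show "z \<le> sig w" by (simp add: sig_sig)
next
  assume "z \<le> sig w" then have "sig z \<le> sig (sig w)" by (rule fh_mono[OF hsig])
  then show "sig z \<le> w" by (simp add: sig_sig)
qed

lemma m_i_fun: "m \<circ> i = sig \<circ> m"
proof -
  let ?A = "sig \<circ> m" and ?B = "m \<circ> i"
  have hA: "frame_hom ?A" by (rule fh_comp[OF hsig hm])
  have hB: "frame_hom ?B" by (rule fh_comp[OF hm hi])
  have cAm: "cmp ?A m" unfolding cmp_def by (simp add: mr sig_p2 ir md)
  have cmB: "cmp m ?B" unfolding cmp_def by (simp add: id')
  have cp1i_m: "cmp (p1 \<circ> i) m" unfolding cmp_def by (simp add: ir md)
  have cp1i_p1: "cmp (p1 \<circ> i) p1" unfolding cmp_def by (simp add: ir)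
  have X1: "pair (p1 \<circ> i) m \<circ> m = p2"
  proof -
    have "pair (pair (p1 \<circ> i) p1 \<circ> m) p2 \<circ> m = pair (p1 \<circ> i) (pair p1 p2 \<circ> m) \<circ> m"
      by (rule gassoc[OF hp1i P.hp1 P.hp2 cp1i_p1 cmp_p])
    then have "pair (p1 \<circ> i) m \<circ> m = pair (pair (p1 \<circ> i) p1 \<circ> m) p2 \<circ> m" by (simp add: pair_id)
    also have "pair (p1 \<circ> i) p1 \<circ> m = p2 \<circ> (d \<circ> u)"
    proof -
      have "pair (p1 \<circ> i) p1 \<circ> m = p1 \<circ> (r \<circ> u)" by (rule ginvR[OF P.hp1])
      also have "\<dots> = p2 \<circ> (d \<circ> u)" by (rule ext) (simp add: P.comm)
      finally show ?thesis .
    qed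
    also have "pair (p2 \<circ> (d \<circ> u)) p2 \<circ> m = p2" by (rule gunitL[OF P.hp2])
    finally show ?thesis .
  qed
  have X2: "pair ?A m \<circ> m = p2 \<circ> (r \<circ> u)"
  proof -
    have "pair ?A m \<circ> m = pair (pair (p2 \<circ> i) (p1 \<circ> i) \<circ> m) m \<circ> m" by (simp add: sig_def)
    also have "\<dots> = pair (p2 \<circ> i) (pair (p1 \<circ> i) m \<circ> m) \<circ> m"
      by (rule gassoc[OF hp2i hp1i hm cmp_sig cp1i_m])
    also have "\<dots> = pair (p2 \<circ> i) p2 \<circ> m" by (simp only: X1)
    also have "\<dots> = p2 \<circ> (r \<circ> u)" by (rule ginvR[OF P.hp2])
    finally show ?thesis .
  qed
  have Y: "?A \<circ> (r \<circ> u) = pair m ?B \<circ> m"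
  proof -
    have "?A \<circ> (r \<circ> u) = m \<circ> (d \<circ> u)" by (rule ext) (simp add: mr sig_p2 ir md)
    also have "\<dots> = pair m ?B \<circ> m" by (rule ginvL[OF hm, symmetric])
    finally show ?thesis .
  qed
  have Z: "p2 \<circ> (r \<circ> u) = ?B \<circ> (d \<circ> u)" by (rule ext) (simp add: id' mr)
  have "?A = pair ?A (?A \<circ> (r \<circ> u)) \<circ> m" by (rule gunitR[OF hA, symmetric])
  also have "\<dots> = pair ?A (pair m ?B \<circ> m) \<circ> m" by (simp only: Y)
  also have "\<dots> = pair (pair ?A m \<circ> m) ?B \<circ> m" by (rule gassoc[OF hA hm hB cAm cmB, symmetric])
  also have "\<dots> = pair (?B \<circ> (d \<circ> u)) ?B \<circ> m" by (simp only: X2 Z)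
  also have "\<dots> = ?B" by (rule gunitL[OF hB])
  finally show ?thesis by simp
qed

lemma m_i: "m (i x) = sig (m x)" using m_i_fun by (metis comp_apply)

lemma i_ML: "i (mlow s) = mlow (sig s)"
proof (rule le_antisym_all)
  fix w
  have "i (mlow s) \<le> w \<longleftrightarrow> mlow s \<le> i w" by (rule i_le_iff)
  also have "\<dots> \<longleftrightarrow> s \<le> sig (m w)" by (simp add: mlow_adj m_i)
  also have "\<dots> \<longleftrightarrow> mlow (sig s) \<le> w" by (simp add: mlow_adj sig_le_iff)
  finally show "i (mlow s) \<le> w \<longleftrightarrow> mlow (sig s) \<le> w" .
qed

abbreviation "mult \<equiv> OG_mult m p1 p2"
lemma mult_eq: "mult x y = mlow (p1 x \<sqinter> p2 y)" by (simp add: OG_mult_def mlow_def)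

lemma mult_inv: "i (mult x y) = mult (i y) (i x)"
  by (simp add: mult_eq i_ML fh_inf[OF hsig] sig_p1 sig_p2 inf_commute)

lemma Tc: "q1 (p2 (r x)) = q2 (d x)" using T.comm by simp
lemma hq1: "frame_hom q1" by (rule T.hp1)
lemma hq2: "frame_hom q2" by (rule T.hp2)
lemma c2: "cmp (q1 \<circ> p2) q2" unfolding cmp_def by (simp add: Tc)
lemma hpr: "frame_hom pr23" unfolding pr23_def by (rule pair_hom[OF fh_comp[OF hq1 P.hp2] hq2 c2])
lemma pr1: "pr23 (p1 x) = q1 (p2 x)" unfolding pr23_def using pair_p1[OF fh_comp[OF hq1 P.hp2] hq2 c2] by simp
lemma pr2: "pr23 (p2 x) = q2 x" unfolding pr23_def using pair_p2[OF fh_comp[OF hq1 P.hp2] hq2 c2] by simp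
lemma c3: "cmp (q1 \<circ> p1) (pr23 \<circ> m)" unfolding cmp_def by (simp add: md pr1 P.comm)
lemma hI: "frame_hom Ix" unfolding Ix_def by (rule pair_hom[OF fh_comp[OF hq1 P.hp1] fh_comp[OF hpr hm] c3])
lemma I1: "Ix (p1 x) = q1 (p1 x)" unfolding Ix_def using pair_p1[OF fh_comp[OF hq1 P.hp1] fh_comp[OF hpr hm] c3] by simp
lemma I2: "Ix (p2 x) = pr23 (m x)" unfolding Ix_def using pair_p2[OF fh_comp[OF hq1 P.hp1] fh_comp[OF hpr hm] c3] by simp

lemma BC:
  assumes "q1 s \<sqinter> q2 z \<le> Mx v"
  shows "p1 (mlow s) \<sqinter> p2 z \<le> v"
proof -
  let ?E = "{(s', z'). p1 (mlow s') \<sqinter> p2 z' \<le> v}"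
  have sat: "sat_C_ideal (p2 \<circ> r) d ?E"
    unfolding sat_C_ideal_def
  proof (intro conjI allI impI)
    fix x y x' y' assume a: "(x, y) \<in> ?E" "x' \<le> x" "y' \<le> y"
    have "p1 (mlow x') \<sqinter> p2 y' \<le> p1 (mlow x) \<sqinter> p2 y"
      using a(2,3) by (intro inf_mono fh_mono[OF P.hp1] fh_mono[OF P.hp2] mlow_mono)
    moreover have "p1 (mlow x) \<sqinter> p2 y \<le> v" using a(1) by simp
    ultimately have "p1 (mlow x') \<sqinter> p2 y' \<le> v" by (rule order_trans)
    then show "(x', y') \<in> ?E" by simp
  next
    fix S y assume "\<forall>x\<in>S. (x, y) \<in> ?E"
    then show "(Sup S, y) \<in> ?E"
      by (auto simp: mlow_Sup fh_Sup[OF P.hp1] image_image intro!: frame_le_Sup_inf)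
  next
    fix x T assume "\<forall>y\<in>T. (x, y) \<in> ?E"
    then show "(x, Sup T) \<in> ?E"
      by (auto simp: fh_Sup[OF P.hp2] intro!: frame_le_inf_Sup)
  next
    fix x y c
    have "mlow (x \<sqinter> (p2 \<circ> r) c) = mlow x \<sqinter> r c"
      using mlow_frob[of x "r c"] by (simp add: mr)
    then have "p1 (mlow (x \<sqinter> (p2 \<circ> r) c)) \<sqinter> p2 y = p1 (mlow x) \<sqinter> p2 (d c \<sqinter> y)"
      by (simp add: fh_inf[OF P.hp1] fh_inf[OF P.hp2] P.comm ac_simps)
    then show "((x \<sqinter> (p2 \<circ> r) c, y) \<in> ?E) = ((x, d c \<sqinter> y) \<in> ?E)" by simp
  qed
  have "Mx v \<le> T.phi ?E" unfolding Mx_def frame_pair_def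
  proof (rule Sup_least, safe)
    fix x' y' assume xy: "p1 x' \<sqinter> p2 y' \<le> v"
    have "p1 (mlow (m x')) \<sqinter> p2 y' \<le> p1 x' \<sqinter> p2 y'"
      by (intro inf_mono fh_mono[OF P.hp1] mlow_counit order_refl)
    then have "p1 (mlow (m x')) \<sqinter> p2 y' \<le> v" using xy by (rule order_trans)
    then have "(m x', y') \<in> ?E" by simp
    then show "(q1 \<circ> m) x' \<sqinter> q2 y' \<le> T.phi ?E" using T.gen_le_phi by simp
  qed
  then have "q1 s \<sqinter> q2 z \<le> T.phi ?E" using assms by (rule order_trans[rotated])
  then have "(s, z) \<in> ?E" using T.sat_mem[OF sat] by blast
  then show ?thesis by simp
qed

lemma assoc_le: "mult (mult x y) z \<le> mult x (mult y z)"
proof -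
  let ?s = "p1 x \<sqinter> p2 y" and ?t = "p1 y \<sqinter> p2 z"
  let ?w = "mult x (mult y z)"
  have "p1 x \<sqinter> p2 (mlow ?t) \<le> m ?w" by (simp add: mult_eq mlow_unit)
  then have "Ix (p1 x \<sqinter> p2 (mlow ?t)) \<le> Ix (m ?w)" by (rule fh_mono[OF hI])
  moreover have "q1 ?s \<sqinter> q2 z \<le> Ix (p1 x \<sqinter> p2 (mlow ?t))"
  proof -
    have "pr23 ?t \<le> pr23 (m (mlow ?t))" by (rule fh_mono[OF hpr mlow_unit])
    then have "q1 (p2 y) \<sqinter> q2 z \<le> pr23 (m (mlow ?t))" by (simp add: fh_inf[OF hpr] pr1 pr2)
    then have "q1 (p1 x) \<sqinter> (q1 (p2 y) \<sqinter> q2 z) \<le> q1 (p1 x) \<sqinter> pr23 (m (mlow ?t))"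
      by (rule inf_mono[OF order_refl])
    moreover have "Ix (p1 x \<sqinter> p2 (mlow ?t)) = q1 (p1 x) \<sqinter> pr23 (m (mlow ?t))"
      by (simp add: fh_inf[OF hI] I1 I2)
    moreover have "q1 ?s \<sqinter> q2 z = q1 (p1 x) \<sqinter> (q1 (p2 y) \<sqinter> q2 z)"
      by (simp add: fh_inf[OF hq1] inf_assoc)
    ultimately show ?thesis by simp
  qed
  ultimately have "q1 ?s \<sqinter> q2 z \<le> Ix (m ?w)" by (rule order_trans[rotated])
  moreover have "Mx (m ?w) = Ix (m ?w)" using fun_cong[OF assoc_ax, of ?w] by simp
  ultimately have "q1 ?s \<sqinter> q2 z \<le> Mx (m ?w)" by simp
  then have "p1 (mlow ?s) \<sqinter> p2 z \<le> m ?w" by (rule BC)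
  then show ?thesis by (simp add: mult_eq mlow_adj)
qed

lemma mult_assoc: "mult (mult x y) z = mult x (mult y z)"
proof (rule antisym)
  show "mult (mult x y) z \<le> mult x (mult y z)" by (rule assoc_le)
  have "i (mult x (mult y z)) = mult (mult (i z) (i y)) (i x)" by (simp add: mult_inv)
  also have "\<dots> \<le> mult (i z) (mult (i y) (i x))" by (rule assoc_le)
  also have "\<dots> = i (mult (mult x y) z)" by (simp add: mult_inv)
  finally have "i (i (mult x (mult y z))) \<le> i (i (mult (mult x y) z))" by (rule fh_mono[OF hi])
  then show "mult x (mult y z) \<le> mult (mult x y) z" by (simp add: ii)
qed

end



context olg begin

abbreviation "lact \<equiv> OG_lact d"
abbreviation "ract \<equiv> OG_ract r"

lemma bimod: "bimodule lact ract"
  unfolding bimodule_def OG_lact_def OG_ract_def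
  by (simp add: fh_Sup[OF hd] fh_Sup[OF hr] fh_inf[OF hd] fh_inf[OF hr] fh_top[OF hd] fh_top[OF hr]
      frame_Sup_inf frame_inf_Sup image_image ac_simps)

lemma AAq: "AA_quantale lact ract mult"
  unfolding AA_quantale_def
proof (intro conjI allI bimod)
  fix x y z show "mult (mult x y) z = mult x (mult y z)" by (rule mult_assoc)
next
  fix X :: "'a1 set" and y
  show "mult (Sup X) y = Sup ((\<lambda>x. mult x y) ` X)"
    by (simp add: mult_eq fh_Sup[OF P.hp1] frame_Sup_inf mlow_Sup image_image)
next
  fix x and Y :: "'a1 set"
  show "mult x (Sup Y) = Sup (mult x ` Y)"
    by (simp add: mult_eq fh_Sup[OF P.hp2] frame_inf_Sup mlow_Sup image_image)
next
  fix a x y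
  have "p1 (d a \<sqinter> x) \<sqinter> p2 y = (p1 x \<sqinter> p2 y) \<sqinter> m (d a)"
    by (simp add: fh_inf[OF P.hp1] md ac_simps)
  then have "mult (lact a x) y = mlow (p1 x \<sqinter> p2 y) \<sqinter> d a"
    by (simp add: mult_eq OG_lact_def mlow_frob)
  then show "mult (lact a x) y = lact a (mult x y)"
    by (simp add: OG_lact_def mult_eq inf_commute)
next
  fix a x y
  show "mult (ract x a) y = mult x (lact a y)"
    by (simp add: mult_eq OG_lact_def OG_ract_def fh_inf[OF P.hp1] fh_inf[OF P.hp2] P.comm ac_simps)
next
  fix a x y
  have "p1 x \<sqinter> p2 (r a \<sqinter> y) = (p1 x \<sqinter> p2 y) \<sqinter> m (r a)"
    by (simp add: fh_inf[OF P.hp2] mr ac_simps)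
  then have "mult x (ract y a) = mlow (p1 x \<sqinter> p2 y) \<sqinter> r a"
    by (simp add: mult_eq OG_ract_def mlow_frob)
  then show "ract (mult x y) a = mult x (ract y a)"
    by (simp add: OG_ract_def mult_eq inf_commute)
qed

lemma bqf: "based_quantal_frame lact ract mult i"
  unfolding based_quantal_frame_def involutive_AA_quantale_def
proof (intro conjI allI AAq)
  fix X show "i (Sup X) = Sup (i ` X)" by (rule fh_Sup[OF hi])
next
  fix x show "i (i x) = x" by (rule ii)
next
  fix x y show "i (mult x y) = mult (i y) (i x)" by (rule mult_inv)
next
  fix a b x show "i (lact a (ract x b)) = lact b (ract (i x) a)"
    by (simp add: OG_lact_def OG_ract_def fh_inf[OF hi] id' ir ac_simps)
next
  fix a x y show "lact a x \<sqinter> y = lact a (x \<sqinter> y)" by (simp add: OG_lact_def inf_assoc)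
next
  fix a x y show "ract x a \<sqinter> y = ract (x \<sqinter> y) a" by (simp add: OG_ract_def inf_assoc)
qed

lemma tensA_eq: "tensA lact ract = {D. sat_C_ideal r d D}"
  unfolding tensA_def sat_C_ideal_def OG_lact_def OG_ract_def by (simp add: inf_commute)

lemma muA_eq: "muA mult D = mlow (P.phi D)"
proof -
  have "{mult x y | x y. (x, y) \<in> D} = mlow ` {p1 x \<sqinter> p2 y | x y. (x, y) \<in> D}"
    by (auto simp: mult_eq)
  then show ?thesis unfolding muA_def P.phi_def by (simp add: mlow_Sup)
qed

lemma tensA_Sup_eq:
  assumes "sat_C_ideal r d X" "\<Union>F = X"
  shows "tensA_Sup lact ract F = X"
  unfolding tensA_Sup_def tensA_eq using assms by auto

lemma radj_eq: "muA_radj lact ract mult z = P.Zs (m z)"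
proof -
  have "\<Union>{D \<in> tensA lact ract. muA mult D \<le> z} = P.Zs (m z)"
  proof
    show "\<Union>{D \<in> tensA lact ract. muA mult D \<le> z} \<subseteq> P.Zs (m z)"
    proof (safe)
      fix a b D assume D: "D \<in> tensA lact ract" "muA mult D \<le> z" "(a, b) \<in> D"
      have sD: "sat_C_ideal r d D" using D(1) tensA_eq by blast
      have "P.phi D \<le> m z" using D(2) by (simp add: muA_eq mlow_adj)
      then have "P.Zs (P.phi D) \<subseteq> P.Zs (m z)" by (simp add: P.Zs_le_iff)
      then show "(a, b) \<in> P.Zs (m z)" using P.sat_eq[OF sD] D(3) by blast
    qed
  next
    have "P.Zs (m z) \<in> {D \<in> tensA lact ract. muA mult D \<le> z}"
      by (simp add: tensA_eq P.Zs_sat muA_eq P.phi_Zs mlow_counit)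
    then show "P.Zs (m z) \<subseteq> \<Union>{D \<in> tensA lact ract. muA mult D \<le> z}" by blast
  qed
  then show ?thesis unfolding muA_radj_def by (simp add: tensA_Sup_eq P.Zs_sat)
qed

lemma multiplicative: "multiplicative lact ract mult"
  unfolding multiplicative_def
proof (intro allI)
  fix Z :: "'a1 set"
  have "tensA_Sup lact ract (muA_radj lact ract mult ` Z) = P.Zs (m (Sup Z))"
  proof -
    have fam: "{E \<in> tensA lact ract. \<Union>(muA_radj lact ract mult ` Z) \<subseteq> E}
             = {E \<in> tensA lact ract. P.Zs (m (Sup Z)) \<subseteq> E}"
    proof (intro Collect_cong conj_cong refl)
      fix E assume "E \<in> tensA lact ract"
      then have sE: "sat_C_ideal r d E" by (simp add: tensA_eq)
      have "\<Union>(muA_radj lact ract mult ` Z) \<subseteq> E \<longleftrightarrow> (\<forall>z\<in>Z. P.Zs (m z) \<subseteq> P.Zs (P.phi E))"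
        using P.sat_eq[OF sE] by (auto simp: radj_eq)
      also have "\<dots> \<longleftrightarrow> (\<forall>z\<in>Z. m z \<le> P.phi E)" by (simp add: P.Zs_le_iff)
      also have "\<dots> \<longleftrightarrow> m (Sup Z) \<le> P.phi E" by (simp add: fh_Sup[OF hm] Sup_le_iff)
      also have "\<dots> \<longleftrightarrow> P.Zs (m (Sup Z)) \<subseteq> E" using P.sat_eq[OF sE] by (metis P.Zs_le_iff)
      finally show "\<Union>(muA_radj lact ract mult ` Z) \<subseteq> E \<longleftrightarrow> P.Zs (m (Sup Z)) \<subseteq> E" .
    qed
    show ?thesis unfolding tensA_Sup_def fam
      using P.Zs_sat[of "m (Sup Z)"] by (auto simp: tensA_eq)
  qed
  then show "muA_radj lact ract mult (Sup Z) = tensA_Sup lact ract (muA_radj lact ract mult ` Z)"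
    by (simp add: radj_eq)
qed

lemma DL_eq: "lower_adj d = DL" by (simp add: DL_def)

lemma DL_top: "DL top = top"
proof -
  have "top \<le> d (DL top)" by (rule DL_unit)
  then have "d (DL top) = top" by (simp add: top_unique)
  then have "u (d (DL top)) = u top" by simp
  then show ?thesis by (simp add: ud fh_top[OF hu])
qed

lemma unit_ineq: "d (u w) \<sqinter> y \<le> mult w y"
proof -
  have "frame_pair p1 p2 (d \<circ> u) id (m (mult w y)) = mult w y"
    using unitL by (metis comp_apply id_apply)
  moreover have "d (u w) \<sqinter> y \<le> frame_pair p1 p2 (d \<circ> u) id (m (mult w y))"
  proof -
    have "p1 w \<sqinter> p2 y \<le> m (mult w y)" by (simp add: mult_eq mlow_unit)
    then have "d (u w) \<sqinter> y \<in> {(d \<circ> u) x' \<sqinter> id y' | x' y'. p1 x' \<sqinter> p2 y' \<le> m (mult w y)}" by force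
    then show ?thesis unfolding frame_pair_def by (rule Sup_upper)
  qed
  ultimately show ?thesis by simp
qed

lemma supp: "support lact mult i DL"
  unfolding support_def
proof (intro conjI allI)
  fix X show "DL (Sup X) = Sup (DL ` X)" by (rule DL_Sup)
next
  show "DL top = top" by (rule DL_top)
next
  fix x y
  let ?w = "mult x (i x)"
  have "frame_pair p1 p2 id i (m ?w) = d (u ?w)"
    using invL by (metis comp_apply)
  moreover have "x \<sqinter> i (i x) \<le> frame_pair p1 p2 id i (m ?w)"
  proof -
    have "p1 x \<sqinter> p2 (i x) \<le> m ?w" by (simp add: mult_eq mlow_unit)
    then have "x \<sqinter> i (i x) \<in> {id x' \<sqinter> i y' | x' y'. p1 x' \<sqinter> p2 y' \<le> m ?w}" by force
    then show ?thesis unfolding frame_pair_def by (rule Sup_upper)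
  qed
  ultimately have "x \<le> d (u ?w)" by (simp add: ii)
  then have "DL x \<le> u ?w" by (simp add: DL_adj)
  then have "d (DL x) \<le> d (u ?w)" by (rule fh_mono[OF hd])
  then have "d (DL x) \<sqinter> y \<le> d (u ?w) \<sqinter> y" by (rule inf_mono) simp
  also have "\<dots> \<le> mult ?w y" by (rule unit_ineq)
  finally show "lact (DL x) y \<le> mult (mult x (i x)) y" by (simp add: OG_lact_def)
next
  fix x show "lact (DL x) x = x" using DL_unit[of x] by (simp add: OG_lact_def inf_absorb2)
qed

lemma equiv: "equivariant_support lact DL"
  unfolding equivariant_support_def OG_lact_def
  by (simp add: inf_commute[of "d _"] DL_frob inf_commute)

lemma refl: "reflexive lact ract u"
  unfolding reflexive_def OG_lact_def OG_ract_def by (simp add: hu ud ur)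

lemma unitlaws: "unit_laws lact mult u"
  unfolding unit_laws_def
proof
  fix a
  have "frame_pair p1 p2 (d \<circ> u) id (m a) = a" using unitL by (metis comp_apply id_apply)
  moreover have "{d (u x) \<sqinter> y | x y. p1 x \<sqinter> p2 y \<le> m a} = {lact (u x) y | x y. mult x y \<le> a}"
    by (simp add: mult_eq mlow_adj OG_lact_def)
  ultimately show "Sup {lact (u x) y | x y. mult x y \<le> a} = a"
    unfolding frame_pair_def by simp
qed

lemma invlaw: "inverse_law lact mult i u"
  unfolding inverse_law_def
proof
  fix a
  have "frame_pair p1 p2 id i (m a) = d (u a)" using invL by (metis comp_apply)
  moreover have "{x \<sqinter> i y | x y. p1 x \<sqinter> p2 y \<le> m a} = {x \<sqinter> y | x y. mult x (i y) \<le> a}"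
  proof safe
    fix x y assume "p1 x \<sqinter> p2 y \<le> m a"
    then show "\<exists>x' y'. x \<sqinter> i y = x' \<sqinter> y' \<and> mult x' (i y') \<le> a"
      by (intro exI[of _ x] exI[of _ "i y"]) (simp add: ii mult_eq mlow_adj)
  next
    fix x y assume "mult x (i y) \<le> a"
    then show "\<exists>x' y'. x \<sqinter> y = x' \<sqinter> i y' \<and> p1 x' \<sqinter> p2 y' \<le> m a"
      by (intro exI[of _ x] exI[of _ "i y"]) (simp add: ii mult_eq mlow_adj)
  qed
  ultimately show "lact (u a) top = Sup {x \<sqinter> y | x y. mult x (i y) \<le> a}"
    unfolding frame_pair_def by (simp add: OG_lact_def)
qed

lemma main: "groupoid_quantale lact ract mult i (lower_adj d) u"
  unfolding groupoid_quantale_def DL_eq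
  using bqf multiplicative supp equiv refl unitlaws invlaw by blast

end

theorem theorem5p13:
  fixes d r :: "'a0::frame \<Rightarrow> 'a1::frame" and u :: "'a1 \<Rightarrow> 'a0" and i :: "'a1 \<Rightarrow> 'a1"
    and m p1 p2 :: "'a1 \<Rightarrow> 'a2::frame" and q1 :: "'a2 \<Rightarrow> 'a3::frame" and q2 :: "'a1 \<Rightarrow> 'a3"
  assumes "open_localic_groupoid d r u i m p1 p2 q1 q2"
  shows "groupoid_quantale (OG_lact d) (OG_ract r) (OG_mult m p1 p2) i (lower_adj d) u"
proof -
  interpret olg d r u i m p1 p2 q1 q2 by unfold_locales (rule assms)
  show ?thesis by (rule main)
qed



end
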